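(* Let $G$ be an SE-graph, $\phi$ an $(I|J)$-flow and $\phi'$ an $(I'|J')$-flow in $G$, and let $P_1,\dots,P_k$ be the exchange paths of the double flow $(\phi,\phi')$. Then: (i) $k=(|I^\circ|+|I^\bullet|+|J^\circ|+|J^\bullet|)/2$; (ii) the set of endvertices of $P_1,\dots,P_k$ is $\{r_i:i\in I^\circ\cup I^\bullet\}\cup\{c_j:j\in J^\circ\cup J^\bullet\}$, and each $P_i$ connects either a vertex of $\{r_i:i\in I^\circ\}$ with one of $\{r_i:i\in I^\bullet\}$, or a vertex of $\{c_j:j\in J^\circ\}$ with one of $\{c_j:j\in J^\bullet\}$, or a vertex of $\{r_i:i\in I^\circ\}$ with one of $\{c_j:j\in J^\circ\}$, or a vertex of $\{r_i:i\in I^\bullet\}$ with one of $\{c_j:j\in J^\bullet\}$; (iii) in each path $P_i$, traversed from one end to the other, the edges of $\phi$ and the edges of $\phi'$ have opposite directions (say, all edges of $\phi$ on $P_i$ are traversed forward and all edges of $\phi'$ backward).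
   Context: Notation: $[p]=\{1,\dots,p\}$; $\mathcal E^{m,n}$ is the set of pairs $(I|J)$, $I\subseteq[m]$, $J\subseteq[n]$, $|I|=|J|$. An SE-graph is a finite directed graph $G=(V,E)$ embedded in the plane (planar with a fixed layout) such that: every edge is either horizontal (H-edge) directed to the right or vertical (V-edge) directed downward; there are distinguished sources $r_1,\dots,r_m$ on a vertical line in this order upward and sinks $c_1,\dots,c_n$ on a horizontal line in this order from left to right; sources are incident only with H-edges, sinks only with V-edges; every vertex lies on a directed path from a source to a sink. For $(I|J)\in\mathcal E^{m,n}$, an $(I|J)$-flow is a set of pairwise vertex-disjoint directed paths from $\{r_i:i\in I\}$ to $\{c_j:j\in J\}$. For $(I|J),(I'|J')\in\mathcal E^{m,n}$ put $I^\circ=I\setminus I'$, $I^\bullet=I'\setminus I$, $J^\circ=J\setminus J'$, $J^\bullet=J'\setminus J$. Given an $(I|J)$-flow $\phi$ and an $(I'|J')$-flow $\phi'$ (a double flow), let $E_\phi,E_{\phi'}$ be their edge sets and $U=E_\phi\triangle E_{\phi'}$. In the subgraph $\langle U\rangle$ formed by the edges of $U$, every vertex has degree 1, 2 or 4. Split each vertex $v$ of degree 4 into two nearby vertices $v',v''$ so that the edges of $U$ entering $v$ now enter $v'$ and those leaving $v$ now leave $v''$; the resulting planar graph $\langle U\rangle'$ has all degrees at most 2, so it is a disjoint union of (undirected) simple paths $P'_1,\dots,P'_k$ and simple cycles. The images $P_1,\dots,P_k$ of $P'_1,\dots,P'_k$ in $G$ are called the exchange paths of $(\phi,\phi')$.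 *)

theory Defs
  imports "HOL-Analysis.Analysis"
begin

definition pairs_E :: "nat \<Rightarrow> nat \<Rightarrow> nat set \<Rightarrow> nat set \<Rightarrow> bool" where
  "pairs_E m n I J \<longleftrightarrow> I \<subseteq> {1..m} \<and> J \<subseteq> {1..n} \<and> card I = card J"

definition SE_graph ::
  "'v set \<Rightarrow> ('v \<times> 'v) set \<Rightarrow> ('v \<Rightarrow> real \<times> real) \<Rightarrow> nat \<Rightarrow> nat \<Rightarrow> (nat \<Rightarrow> 'v) \<Rightarrow> (nat \<Rightarrow> 'v) \<Rightarrow> bool"
where
  "SE_graph V E pos m n r c \<longleftrightarrow>
     finite V \<and> E \<subseteq> V \<times> V \<and> inj_on pos V \<and>
     \<comment> \<open>every edge is an H-edge directed right or a V-edge directed down\<close>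
     (\<forall>(u,v)\<in>E. (snd (pos u) = snd (pos v) \<and> fst (pos u) < fst (pos v)) \<or>
                 (fst (pos u) = fst (pos v) \<and> snd (pos u) > snd (pos v))) \<and>
     \<comment> \<open>planar embedding: no vertex in the interior of an edge, edges meet only in common ends\<close>
     (\<forall>w\<in>V. \<forall>(u,v)\<in>E. pos w \<in> closed_segment (pos u) (pos v) \<longrightarrow> w = u \<or> w = v) \<and>
     (\<forall>(u1,v1)\<in>E. \<forall>(u2,v2)\<in>E. (u1,v1) \<noteq> (u2,v2) \<longrightarrow>
         closed_segment (pos u1) (pos v1) \<inter> closed_segment (pos u2) (pos v2)
           \<subseteq> pos ` ({u1,v1} \<inter> {u2,v2})) \<and>
     \<comment> \<open>sources and sinks\<close>
     r ` {1..m} \<subseteq> V \<and> c ` {1..n} \<subseteq> V \<and>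
     r ` {1..m} \<inter> c ` {1..n} = {} \<and>
     (\<forall>i\<in>{1..m}. \<forall>i'\<in>{1..m}. fst (pos (r i)) = fst (pos (r i')) \<and>
                                   (i < i' \<longrightarrow> snd (pos (r i)) < snd (pos (r i')))) \<and>
     (\<forall>j\<in>{1..n}. \<forall>j'\<in>{1..n}. snd (pos (c j)) = snd (pos (c j')) \<and>
                                   (j < j' \<longrightarrow> fst (pos (c j)) < fst (pos (c j')))) \<and>
     (\<forall>i\<in>{1..m}. \<forall>(u,v)\<in>E. (u = r i \<or> v = r i) \<longrightarrow> snd (pos u) = snd (pos v)) \<and>
     (\<forall>j\<in>{1..n}. \<forall>(u,v)\<in>E. (u = c j \<or> v = c j) \<longrightarrow> fst (pos u) = fst (pos v)) \<and>
     \<comment> \<open>every vertex lies on a directed path from a source to a sink\<close>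
     (\<forall>v\<in>V. \<exists>i\<in>{1..m}. \<exists>j\<in>{1..n}. (r i, v) \<in> E\<^sup>* \<and> (v, c j) \<in> E\<^sup>*)"

definition dpath :: "('v \<times> 'v) set \<Rightarrow> 'v list \<Rightarrow> bool" where
  "dpath E ps \<longleftrightarrow> ps \<noteq> [] \<and> distinct ps \<and> successively (\<lambda>a b. (a,b) \<in> E) ps"

definition path_edges :: "'v list \<Rightarrow> ('v \<times> 'v) set" where
  "path_edges ps = set (zip ps (tl ps))"

definition is_flow ::
  "('v \<times> 'v) set \<Rightarrow> (nat \<Rightarrow> 'v) \<Rightarrow> (nat \<Rightarrow> 'v) \<Rightarrow> nat set \<Rightarrow> nat set \<Rightarrow> 'v list set \<Rightarrow> bool"
where
  "is_flow E r c I J \<Phi> \<longleftrightarrow>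
     finite \<Phi> \<and>
     (\<forall>P\<in>\<Phi>. dpath E P \<and> hd P \<in> r ` I \<and> last P \<in> c ` J) \<and>
     (\<forall>P\<in>\<Phi>. \<forall>Q\<in>\<Phi>. P \<noteq> Q \<longrightarrow> set P \<inter> set Q = {}) \<and>
     r ` I \<subseteq> hd ` \<Phi> \<and> c ` J \<subseteq> last ` \<Phi>"

definition flow_edges :: "'v list set \<Rightarrow> ('v \<times> 'v) set" where
  "flow_edges \<Phi> = (\<Union>P\<in>\<Phi>. path_edges P)"

text \<open>U is the symmetric difference of the edge sets. The split graph
  has nodes of type 'v \<times> bool: a vertex v of U-degree 4 is split into (v,False)
  (receiving the entering edges) and (v,True) (receiving the leaving edges);
  any other vertex v is represented by the single node (v,False).\<close>

definition symdiff :: "'a set \<Rightarrow> 'a set \<Rightarrow> 'a set" where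
  "symdiff A B = (A - B) \<union> (B - A)"

definition degU :: "('v \<times> 'v) set \<Rightarrow> 'v \<Rightarrow> nat" where
  "degU U v = card {e \<in> U. fst e = v \<or> snd e = v}"

definition node :: "('v \<times> 'v) set \<Rightarrow> 'v \<Rightarrow> bool \<Rightarrow> 'v \<times> bool" where
  "node U v b = (v, b \<and> degU U v = 4)"

definition split_adj :: "('v \<times> 'v) set \<Rightarrow> 'v \<times> bool \<Rightarrow> 'v \<times> bool \<Rightarrow> bool" where
  "split_adj U x y \<longleftrightarrow> (\<exists>(u,w)\<in>U. (x = node U u True \<and> y = node U w False) \<or>
                                  (y = node U u True \<and> x = node U w False))"

definition split_deg :: "('v \<times> 'v) set \<Rightarrow> 'v \<times> bool \<Rightarrow> nat" where
  "split_deg U x = card {(u,w) \<in> U. node U u True = x \<or> node U w False = x}"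

text \<open>A path component of the split graph, listed from one end to the other:
  a simple path with at least one edge whose end nodes have degree 1 and whose
  inner nodes have degree 2 (so it is a whole connected component).\<close>

definition split_component_path :: "('v \<times> 'v) set \<Rightarrow> ('v \<times> bool) list \<Rightarrow> bool" where
  "split_component_path U xs \<longleftrightarrow>
     distinct xs \<and> length xs \<ge> 2 \<and> successively (split_adj U) xs \<and>
     split_deg U (hd xs) = 1 \<and> split_deg U (last xs) = 1 \<and>
     (\<forall>i. 0 < i \<and> i < length xs - 1 \<longrightarrow> split_deg U (xs ! i) = 2)"

text \<open>Oriented exchange paths (images in G, as vertex sequences; both orientations
  of every path are included).\<close>

definition oriented_exchange_paths :: "'v list set \<Rightarrow> 'v list set \<Rightarrow> 'v list set" where
  "oriented_exchange_paths \<Phi> \<Phi>' =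
     {map fst xs | xs. split_component_path (symdiff (flow_edges \<Phi>) (flow_edges \<Phi>')) xs}"

definition exchange_paths :: "'v list set \<Rightarrow> 'v list set \<Rightarrow> 'v list set set" where
  "exchange_paths \<Phi> \<Phi>' = (\<lambda>P. {P, rev P}) ` oriented_exchange_paths \<Phi> \<Phi>'"

end

theory Submission
  imports Defs
begin


locale sgraph =
  fixes adj :: "'a \<Rightarrow> 'a \<Rightarrow> bool"
  assumes sym: "adj x y \<Longrightarrow> adj y x"
    and irr: "\<not> adj x x"
    and fin: "finite {x. \<exists>y. adj x y}"
    and deg2: "card {y. adj x y} \<le> 2"
begin

definition deg where "deg x = card {y. adj x y}"

definition scp where "scp xs \<longleftrightarrow> distinct xs \<and> length xs \<ge> 2 \<and> successively adj xs \<and>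
  deg (hd xs) = 1 \<and> deg (last xs) = 1 \<and> (\<forall>i. 0 < i \<and> i < length xs - 1 \<longrightarrow> deg (xs ! i) = 2)"

lemma finN: "finite {y. adj x y}"
  by (rule finite_subset[OF _ fin]) (auto intro: sym)

lemma two_nb: "deg x = 1 \<Longrightarrow> adj x a \<Longrightarrow> adj x b \<Longrightarrow> a = b"
proof (rule ccontr)
  assume "deg x = 1" "adj x a" "adj x b" "a \<noteq> b"
  then have "{a,b} \<subseteq> {y. adj x y}" by auto
  then have "card {a,b} \<le> deg x" unfolding deg_def using finN by (rule card_mono[rotated])
  with \<open>a \<noteq> b\<close> \<open>deg x = 1\<close> show False by simp
qed

lemma three_nb: "deg x = 2 \<Longrightarrow> adj x a \<Longrightarrow> adj x b \<Longrightarrow> adj x c \<Longrightarrow> a \<noteq> b \<Longrightarrow> a \<noteq> c \<Longrightarrow> b \<noteq> c \<Longrightarrow> False"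
proof -
  assume "deg x = 2" "adj x a" "adj x b" "adj x c" "a \<noteq> b" "a \<noteq> c" "b \<noteq> c"
  then have "{a,b,c} \<subseteq> {y. adj x y}" by auto
  then have "card {a,b,c} \<le> deg x" unfolding deg_def using finN by (rule card_mono[rotated])
  with \<open>a \<noteq> b\<close> \<open>a \<noteq> c\<close> \<open>b \<noteq> c\<close> \<open>deg x = 2\<close> show False by simp
qed

lemma scp_adj: "scp xs \<Longrightarrow> Suc i < length xs \<Longrightarrow> adj (xs ! i) (xs ! Suc i)"
  unfolding scp_def by (auto intro: successively_nth)

lemma scp_unique:
  assumes x: "scp xs" and y: "scp ys" and h: "hd xs = hd ys"
  shows "xs = ys"
proof -
  have ne: "xs \<noteq> []" "ys \<noteq> []" using x y unfolding scp_def by auto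
  have eq: "i < length xs \<longrightarrow> i < length ys \<longrightarrow> (\<forall>j\<le>i. xs ! j = ys ! j)" for i
  proof (induction i)
    case 0
    then show ?case using h ne by (auto simp: hd_conv_nth)
  next
    case (Suc i)
    show ?case
    proof (intro impI)
      assume a: "Suc i < length xs" "Suc i < length ys"
      then have IH: "\<forall>j\<le>i. xs ! j = ys ! j" using Suc by auto
      have "xs ! Suc i = ys ! Suc i"
      proof (cases "i = 0")
        case True
        have "deg (xs ! 0) = 1" using x ne unfolding scp_def by (simp add: hd_conv_nth)
        moreover have "adj (xs ! 0) (xs ! 1)" "adj (ys ! 0) (ys ! 1)" using scp_adj[OF x] scp_adj[OF y] a True by auto
        moreover have "xs ! 0 = ys ! 0" using IH by auto
        ultimately show ?thesis using two_nb True by auto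
      next
        case False
        then obtain i' where i': "i = Suc i'" by (cases i) auto
        have d: "deg (xs ! i) = 2" using x a False unfolding scp_def by auto
        have n1: "adj (xs ! i) (xs ! Suc i)" "adj (ys ! i) (ys ! Suc i)" using scp_adj[OF x] scp_adj[OF y] a by auto
        have n2: "adj (xs ! i) (xs ! i')" using scp_adj[OF x, of i'] a i' by (auto intro: sym)
        have "ys ! i' \<noteq> ys ! Suc i" using y a i' unfolding scp_def by (simp add: nth_eq_iff_index_eq)
        moreover have "xs ! i' \<noteq> xs ! Suc i" using x a i' unfolding scp_def by (simp add: nth_eq_iff_index_eq)
        moreover have "xs ! i' = ys ! i'" "xs ! i = ys ! i" using IH i' by auto
        ultimately show ?thesis using three_nb[OF d n2 n1(1)] n1(2) by metis
      qed
      then show "\<forall>j\<le>Suc i. xs ! j = ys ! j" using IH le_Suc_eq by auto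
    qed
  qed
  have len: "length xs = length ys"
  proof (rule ccontr)
    assume "length xs \<noteq> length ys"
    then consider "length xs < length ys" | "length ys < length xs" by linarith
    then show False
    proof cases
      case 1
      let ?l = "length xs - 1"
      have "xs ! ?l = ys ! ?l" using eq[of ?l] 1 ne by auto
      moreover have "deg (xs ! ?l) = 1" using x ne unfolding scp_def by (simp add: last_conv_nth)
      moreover have "deg (ys ! ?l) = 2" using y x 1 unfolding scp_def by auto
      ultimately show False by simp
    next
      case 2
      let ?l = "length ys - 1"
      have "xs ! ?l = ys ! ?l" using eq[of ?l] 2 ne by auto
      moreover have "deg (ys ! ?l) = 1" using y ne unfolding scp_def by (simp add: last_conv_nth)
      moreover have "deg (xs ! ?l) = 2" using y x 2 unfolding scp_def by auto
      ultimately show False by simp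
    qed
  qed
  show ?thesis using eq len by (auto intro: nth_equalityI)
qed

lemma scp_rev: "scp xs \<Longrightarrow> scp (rev xs)"
  unfolding scp_def
  apply (auto simp: hd_rev last_rev rev_nth intro: sym elim: successively_mono)
  subgoal for i
    apply (drule spec[of _ "length xs - Suc i"])
    by auto
  done


lemma scp_exists:
  assumes d0: "deg x0 = 1"
  shows "\<exists>xs. scp xs \<and> hd xs = x0"
proof -
  define W where "W = insert x0 {x. \<exists>y. adj x y}"
  define L where "L = {xs. distinct xs \<and> xs \<noteq> [] \<and> hd xs = x0 \<and> successively adj xs \<and>
     (\<forall>i. 0 < i \<and> i < length xs - 1 \<longrightarrow> deg (xs ! i) = 2)}"
  have "L \<subseteq> {xs. set xs \<subseteq> W \<and> distinct xs}"
  proof safe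
    fix xs x assume xs: "xs \<in> L" and "x \<in> set xs"
    then obtain i where i: "i < length xs" "x = xs ! i" by (auto simp: in_set_conv_nth)
    show "x \<in> W"
    proof (cases i)
      case 0 then show ?thesis using xs i unfolding L_def W_def by (auto simp: hd_conv_nth)
    next
      case (Suc j)
      then have "adj (xs ! j) (xs ! i)" using xs i unfolding L_def by (auto intro: successively_nth)
      then show ?thesis using i unfolding W_def by (auto intro: sym)
    qed
  qed (auto simp: L_def)
  moreover have "finite {xs. set xs \<subseteq> W \<and> distinct xs}"
    by (rule finite_subset_distinct) (simp add: W_def fin)
  ultimately have finL: "finite L" by (rule finite_subset)
  have x0L: "[x0] \<in> L" unfolding L_def by auto
  define M where "M = Max (length ` L)"
  have "M \<in> length ` L" unfolding M_def using finL x0L by (intro Max_in) auto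
  then obtain xs where xsL: "xs \<in> L" and lx: "length xs = M" by auto
  have maxl: "ys \<in> L \<Longrightarrow> length ys \<le> length xs" for ys
    unfolding lx M_def using finL by (intro Max_ge) auto
  have xs: "distinct xs" "xs \<noteq> []" "hd xs = x0" "successively adj xs"
     "\<And>i. 0 < i \<Longrightarrow> i < length xs - 1 \<Longrightarrow> deg (xs ! i) = 2" using xsL unfolding L_def by auto
  have "{y. adj x0 y} \<noteq> {}" using d0 unfolding deg_def by (metis card.empty zero_neq_one)
  then obtain y where y: "adj x0 y" by auto
  have "[x0, y] \<in> L" using y irr unfolding L_def by (auto simp: irr)
  from maxl[OF this] have len2: "length xs \<ge> 2" by simp
  define n where "n = length xs"
  have x00: "xs ! 0 = x0" using xs by (simp add: hd_conv_nth)
  have lastn: "last xs = xs ! (n - 1)" using xs n_def by (simp add: last_conv_nth)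
  have adjn: "Suc i < n \<Longrightarrow> adj (xs ! i) (xs ! Suc i)" for i using xs(4) n_def by (simp add: successively_nth)
  have nbp: "adj (last xs) (xs ! (n - 2))" using adjn[of "n-2"] len2 lastn n_def
    by (auto intro: sym simp: Suc_diff_Suc numeral_2_eq_2)
  have "deg (last xs) = 1"
  proof (rule ccontr)
    assume nd: "deg (last xs) \<noteq> 1"
    have "deg (last xs) \<noteq> 0" using nbp finN unfolding deg_def by auto
    with nd deg2[of "last xs"] have d2: "deg (last xs) = 2" unfolding deg_def by auto
    have "card ({y. adj (last xs) y} - {xs ! (n - 2)}) = 1"
      using d2 nbp finN unfolding deg_def by (simp add: card_Diff_singleton)
    then obtain z where z: "adj (last xs) z" "z \<noteq> xs ! (n - 2)"
      by (metis (no_types, lifting) DiffE card_1_singletonE insertI1 mem_Collect_eq singletonD)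
    show False
    proof (cases "z \<in> set xs")
      case False
      have "xs @ [z] \<in> L" unfolding L_def
      proof (intro CollectI conjI allI impI)
        fix i assume i: "0 < i \<and> i < length (xs @ [z]) - 1"
        show "deg ((xs @ [z]) ! i) = 2"
        proof (cases "i = length xs - 1")
          case True then show ?thesis using d2 xs(2) i by (simp add: nth_append last_conv_nth)
        next
          case False then have "i < length xs - 1" using i by auto
          then show ?thesis using xs(5)[of i] i by (simp add: nth_append)
        qed
      qed (use xs False z in \<open>auto simp: successively_append_iff\<close>)
      from maxl[OF this] show False by simp
    next
      case True
      then obtain j where j: "j < n" "z = xs ! j" by (auto simp: in_set_conv_nth n_def)
      have "j \<noteq> n - 1" using z(1) j lastn irr by auto
      moreover have "j \<noteq> n - 2" using z j by auto
      ultimately have jl: "j + 2 < n" using j by linarith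
      show False
      proof (cases j)
        case 0
        have "adj x0 (xs ! 1)" using adjn[of 0] jl x00 by simp
        moreover have "adj x0 (last xs)" using z j 0 x00 by (auto intro: sym)
        moreover have "xs ! 1 \<noteq> last xs" using xs(1) jl lastn n_def by (simp add: nth_eq_iff_index_eq)
        ultimately show False using two_nb d0 by blast
      next
        case (Suc j')
        have dj: "deg (xs ! j) = 2" using xs(5)[of j] Suc jl n_def by simp
        have a1: "adj (xs ! j) (xs ! j')" using adjn[of j'] Suc jl by (auto intro: sym)
        have a2: "adj (xs ! j) (xs ! Suc j)" using adjn[of j] jl by simp
        have a3: "adj (xs ! j) (last xs)" using z j by (auto intro: sym)
        have "xs ! j' \<noteq> xs ! Suc j" "xs ! j' \<noteq> xs ! (n-1)" "xs ! Suc j \<noteq> xs ! (n - 1)"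
          using xs(1) jl Suc n_def by (simp_all add: nth_eq_iff_index_eq)
        then show False using three_nb[OF dj a1 a2 a3] lastn by simp
      qed
    qed
  qed
  then have "scp xs" unfolding scp_def using xs len2 d0 by auto
  then show ?thesis using xs by auto
qed

lemma scp_hd_last: "scp xs \<Longrightarrow> hd xs \<noteq> last xs"
  unfolding scp_def by (cases xs) auto

end



locale flow1 =
  fixes E F :: "('v \<times> 'v) set" and R C SI TJ :: "'v set"
  assumes finE: "finite E"
    and asym: "(a,b) \<in> E \<Longrightarrow> (b,a) \<notin> E"
    and FE: "F \<subseteq> E"
    and noinR: "v \<in> R \<Longrightarrow> (a,v) \<notin> E"
    and nooutC: "v \<in> C \<Longrightarrow> (v,b) \<notin> E"
    and RC: "R \<inter> C = {}"
    and finR: "finite R" and finC: "finite C"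
    and SIR: "SI \<subseteq> R" and TJC: "TJ \<subseteq> C"
    and predu: "(a,v) \<in> F \<Longrightarrow> (a',v) \<in> F \<Longrightarrow> a = a'"
    and succu: "(v,b) \<in> F \<Longrightarrow> (v,b') \<in> F \<Longrightarrow> b = b'"
    and src: "v \<in> R \<Longrightarrow> (\<exists>b. (v,b) \<in> F) \<longleftrightarrow> v \<in> SI"
    and snk: "v \<in> C \<Longrightarrow> (\<exists>a. (a,v) \<in> F) \<longleftrightarrow> v \<in> TJ"
    and mid: "v \<notin> R \<Longrightarrow> v \<notin> C \<Longrightarrow> (\<exists>a. (a,v) \<in> F) \<longleftrightarrow> (\<exists>b. (v,b) \<in> F)"
begin
lemma pred_sub: "{a. (a,v) \<in> F} = {} \<or> (\<exists>a. {a. (a,v) \<in> F} = {a})"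
  using predu by blast
lemma succ_sub: "{b. (v,b) \<in> F} = {} \<or> (\<exists>b. {b. (v,b) \<in> F} = {b})"
  using succu by blast
end

lemma card_symdiff_sub:
  assumes "A = {} \<or> (\<exists>a. A = {a})" "B = {} \<or> (\<exists>b. B = {b})"
  shows "card (symdiff A B) \<le> 2 \<and> (card (symdiff A B) = 1 \<longleftrightarrow> (A = {}) \<noteq> (B = {})) \<and>
     (card (symdiff A B) = 2 \<longleftrightarrow> A \<noteq> {} \<and> B \<noteq> {} \<and> A \<noteq> B)"
proof -
  from assms consider "A = {}" "B = {}" | a where "A = {a}" "B = {}" | b where "A = {}" "B = {b}"
    | a b where "A = {a}" "B = {b}" by blast
  then show ?thesis
  proof cases
    case (4 a b)
    then show ?thesis by (cases "a = b") (simp_all add: symdiff_def insert_Diff_if)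
  qed (simp_all add: symdiff_def)
qed

locale dflow = f1: flow1 E F R C SI TJ + f2: flow1 E F' R C SI' TJ'
  for E F F' R C SI TJ SI' TJ'
begin

definition "U = symdiff F F'"
definition "D = symdiff SI SI' \<union> symdiff TJ TJ'"
definition "inU v = {a. (a,v) \<in> U}"
definition "outU v = {b. (v,b) \<in> U}"

lemma UE: "U \<subseteq> E" using f1.FE f2.FE unfolding U_def symdiff_def by auto
lemma finU: "finite U" using UE f1.finE finite_subset by blast
lemma noloop: "(v,v) \<notin> U" using UE f1.asym by blast
lemma Uasym: "(a,b) \<in> U \<Longrightarrow> (b,a) \<notin> U" using UE f1.asym by blast

lemma inU_eq: "inU v = symdiff {a. (a,v) \<in> F} {a. (a,v) \<in> F'}"
  unfolding inU_def U_def symdiff_def by auto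
lemma outU_eq: "outU v = symdiff {b. (v,b) \<in> F} {b. (v,b) \<in> F'}"
  unfolding outU_def U_def symdiff_def by auto

lemma cin: "card (inU v) \<le> 2 \<and> (card (inU v) = 1 \<longleftrightarrow> ({a. (a,v) \<in> F} = {}) \<noteq> ({a. (a,v) \<in> F'} = {})) \<and>
     (card (inU v) = 2 \<longleftrightarrow> {a. (a,v) \<in> F} \<noteq> {} \<and> {a. (a,v) \<in> F'} \<noteq> {} \<and> {a. (a,v) \<in> F} \<noteq> {a. (a,v) \<in> F'})"
  unfolding inU_eq by (rule card_symdiff_sub[OF f1.pred_sub f2.pred_sub])
lemma cout: "card (outU v) \<le> 2 \<and> (card (outU v) = 1 \<longleftrightarrow> ({b. (v,b) \<in> F} = {}) \<noteq> ({b. (v,b) \<in> F'} = {})) \<and>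
     (card (outU v) = 2 \<longleftrightarrow> {b. (v,b) \<in> F} \<noteq> {} \<and> {b. (v,b) \<in> F'} \<noteq> {} \<and> {b. (v,b) \<in> F} \<noteq> {b. (v,b) \<in> F'})"
  unfolding outU_eq by (rule card_symdiff_sub[OF f1.succ_sub f2.succ_sub])

lemma fin_inU: "finite (inU v)"
proof -
  have "inU v \<subseteq> fst ` U" unfolding inU_def by force
  then show ?thesis using finU finite_subset by blast
qed
lemma fin_outU: "finite (outU v)"
proof -
  have "outU v \<subseteq> snd ` U" unfolding outU_def by force
  then show ?thesis using finU finite_subset by blast
qed

lemma degU_eq: "degU U v = card (inU v) + card (outU v)"
proof -
  have "{e \<in> U. fst e = v \<or> snd e = v} = (\<lambda>a. (a,v)) ` inU v \<union> (\<lambda>b. (v,b)) ` outU v"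
    unfolding inU_def outU_def by force
  moreover have "(\<lambda>a. (a,v)) ` inU v \<inter> (\<lambda>b. (v,b)) ` outU v = {}"
    using noloop unfolding inU_def outU_def by auto
  ultimately have "degU U v = card ((\<lambda>a. (a,v)) ` inU v) + card ((\<lambda>b. (v,b)) ` outU v)"
    unfolding degU_def using fin_inU fin_outU by (simp add: card_Un_disjoint)
  also have "\<dots> = card (inU v) + card (outU v)"
    by (simp add: card_image inj_on_def)
  finally show ?thesis .
qed

lemma deg4: "degU U v = 4 \<longleftrightarrow> card (inU v) = 2 \<and> card (outU v) = 2"
  using degU_eq[of v] cin[of v] cout[of v] by linarith

lemma D_RC: "D \<subseteq> R \<union> C"
  unfolding D_def symdiff_def using f1.SIR f2.SIR f1.TJC f2.TJC by auto

lemma degU_small: "degU U v \<noteq> 4 \<Longrightarrow> degU U v \<le> 2 \<and> (degU U v = 1 \<longleftrightarrow> v \<in> D)"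
proof -
  assume n4: "degU U v \<noteq> 4"
  consider "v \<in> R" | "v \<in> C" | "v \<notin> R" "v \<notin> C" by blast
  then show ?thesis
  proof cases
    case 1
    then have "{a. (a,v) \<in> F} = {}" "{a. (a,v) \<in> F'} = {}" using f1.noinR f1.FE f2.FE by auto
    then have "card (inU v) = 0" unfolding inU_eq symdiff_def by simp
    then have dg: "degU U v = card (outU v)" using degU_eq[of v] by simp
    have "v \<notin> C" using 1 f1.RC by auto
    then have "v \<in> D \<longleftrightarrow> (v \<in> SI) \<noteq> (v \<in> SI')" using f1.TJC f2.TJC unfolding D_def symdiff_def by blast
    also have "\<dots> \<longleftrightarrow> ({b. (v,b) \<in> F} = {}) \<noteq> ({b. (v,b) \<in> F'} = {})"
      using f1.src[OF 1] f2.src[OF 1] by blast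
    also have "\<dots> \<longleftrightarrow> card (outU v) = 1" using cout[of v] by blast
    finally show ?thesis using dg cout[of v] by simp
  next
    case 2
    then have "{b. (v,b) \<in> F} = {}" "{b. (v,b) \<in> F'} = {}" using f1.nooutC f1.FE f2.FE by auto
    then have "card (outU v) = 0" unfolding outU_eq symdiff_def by simp
    then have dg: "degU U v = card (inU v)" using degU_eq[of v] by simp
    have "v \<notin> R" using 2 f1.RC by auto
    then have "v \<in> D \<longleftrightarrow> (v \<in> TJ) \<noteq> (v \<in> TJ')" using f1.SIR f2.SIR unfolding D_def symdiff_def by blast
    also have "\<dots> \<longleftrightarrow> ({a. (a,v) \<in> F} = {}) \<noteq> ({a. (a,v) \<in> F'} = {})"
      using f1.snk[OF 2] f2.snk[OF 2] by blast
    also have "\<dots> \<longleftrightarrow> card (inU v) = 1" using cin[of v] by blast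
    finally show ?thesis using dg cin[of v] by simp
  next
    case 3
    then have "v \<notin> D" using D_RC by auto
    moreover have "({a. (a,v) \<in> F} = {}) = ({b. (v,b) \<in> F} = {})" using f1.mid[OF 3] by blast
    moreover have "({a. (a,v) \<in> F'} = {}) = ({b. (v,b) \<in> F'} = {})" using f2.mid[OF 3] by blast
    ultimately have "card (inU v) = 1 \<longleftrightarrow> card (outU v) = 1" "v \<notin> D"
      using cin[of v] cout[of v] by simp_all
    moreover have "card (inU v) \<le> 2" "card (outU v) \<le> 2" using cin[of v] cout[of v] by simp_all
    ultimately show ?thesis using degU_eq[of v] n4 by auto
  qed
qed

lemma node_fst[simp]: "fst (node U v b) = v" by (simp add: node_def)

lemma split_deg_T: "split_deg U (v,True) = (if degU U v = 4 then card (outU v) else 0)"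
proof -
  have "{(u,w) \<in> U. node U u True = (v,True) \<or> node U w False = (v,True)} =
        (if degU U v = 4 then (\<lambda>b. (v,b)) ` outU v else {})"
    unfolding outU_def node_def by auto
  then show ?thesis unfolding split_deg_def by (simp add: card_image inj_on_def)
qed

lemma split_deg_F: "split_deg U (v,False) = (if degU U v = 4 then card (inU v) else degU U v)"
proof (cases "degU U v = 4")
  case True
  have "{(u,w) \<in> U. node U u True = (v,False) \<or> node U w False = (v,False)} =
        (\<lambda>a. (a,v)) ` inU v"
    using True unfolding inU_def node_def by auto
  then show ?thesis using True unfolding split_deg_def by (simp add: card_image inj_on_def)
next
  case False
  have "{(u,w) \<in> U. node U u True = (v,False) \<or> node U w False = (v,False)} =
        {e \<in> U. fst e = v \<or> snd e = v}"
    using False unfolding node_def by auto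
  then show ?thesis using False unfolding split_deg_def degU_def by simp
qed

lemma split_deg_le2: "split_deg U x \<le> 2"
proof (cases x)
  case (Pair v b)
  show ?thesis
  proof (cases b)
    case True
    then show ?thesis using Pair split_deg_T[of v] cout[of v] by simp
  next
    case False
    then show ?thesis using Pair split_deg_F[of v] cin[of v] degU_small[of v] by simp
  qed
qed

lemma D_not4: "v \<in> D \<Longrightarrow> degU U v \<noteq> 4"
proof -
  assume "v \<in> D"
  then have "v \<in> R \<or> v \<in> C" using D_RC by auto
  then have "card (inU v) = 0 \<or> card (outU v) = 0"
  proof
    assume "v \<in> R"
    then have "inU v = {}" using f1.noinR UE unfolding inU_def by auto
    then show ?thesis by simp
  next
    assume "v \<in> C"
    then have "outU v = {}" using f1.nooutC UE unfolding outU_def by auto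
    then show ?thesis by simp
  qed
  then show ?thesis using deg4 by auto
qed

lemma split_deg1: "split_deg U x = 1 \<longleftrightarrow> snd x = False \<and> fst x \<in> D"
proof (cases x)
  case (Pair v b)
  show ?thesis
  proof (cases b)
    case True
    have "split_deg U (v,True) \<noteq> 1"
    proof (cases "degU U v = 4")
      case True
      then show ?thesis using split_deg_T[of v] deg4[of v] by simp
    qed (simp add: split_deg_T)
    then show ?thesis using Pair True by simp
  next
    case False
    have "split_deg U (v,False) = 1 \<longleftrightarrow> v \<in> D"
    proof (cases "degU U v = 4")
      case True
      then show ?thesis using split_deg_F[of v] deg4[of v] D_not4[of v] by auto
    next
      case False
      then show ?thesis using split_deg_F[of v] degU_small[of v] by simp
    qed
    then show ?thesis using Pair False by simp
  qed
qed

end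



context dflow begin

lemma node_eqD: "node U u b = node U w b' \<Longrightarrow> u = w"
  by (metis node_fst)

lemma adj_irr: "\<not> split_adj U x x"
  unfolding split_adj_def using noloop node_eqD by blast

lemma adj_sym: "split_adj U x y \<Longrightarrow> split_adj U y x"
  unfolding split_adj_def by blast

lemma adj_fin: "finite {x. \<exists>y. split_adj U x y}"
proof -
  have "{x. \<exists>y. split_adj U x y} \<subseteq> (fst ` U \<union> snd ` U) \<times> UNIV"
    unfolding split_adj_def node_def by force
  moreover have "finite ((fst ` U \<union> snd ` U) \<times> (UNIV :: bool set))" using finU by simp
  ultimately show ?thesis by (rule finite_subset)
qed

lemma cardN: "card {y. split_adj U x y} = split_deg U x"
proof -
  define S where "S = {(u,w) \<in> U. node U u True = x \<or> node U w False = x}"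
  define g where "g = (\<lambda>(u,w). if node U u True = x then node U w False else node U u True)"
  have "{y. split_adj U x y} = g ` S"
  proof (rule set_eqI, rule iffI)
    fix y assume "y \<in> {y. split_adj U x y}"
    then obtain u w where uw: "(u,w) \<in> U" "(x = node U u True \<and> y = node U w False) \<or> (y = node U u True \<and> x = node U w False)"
      unfolding split_adj_def by blast
    then have "(u,w) \<in> S" unfolding S_def by auto
    moreover have "g (u,w) = y"
    proof (cases "node U u True = x")
      case True
      then show ?thesis using uw noloop node_eqD unfolding g_def by auto
    next
      case False
      then show ?thesis using uw unfolding g_def by auto
    qed
    ultimately show "y \<in> g ` S" by force
  next
    fix y assume "y \<in> g ` S"
    then obtain u w where "(u,w) \<in> S" "y = g (u,w)" by auto
    moreover from this(1) have uw: "(u,w) \<in> U" "node U u True = x \<or> node U w False = x" unfolding S_def by auto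
    moreover have "split_adj U x (g (u,w))"
    proof (cases "node U u True = x")
      case True
      then show ?thesis using uw unfolding g_def split_adj_def by auto
    next
      case False
      then show ?thesis using uw unfolding g_def split_adj_def by auto
    qed
    ultimately show "y \<in> {y. split_adj U x y}" by simp
  qed
  moreover have "inj_on g S"
  proof (rule inj_onI)
    fix e1 e2 assume e: "e1 \<in> S" "e2 \<in> S" "g e1 = g e2"
    obtain u1 w1 u2 w2 where [simp]: "e1 = (u1,w1)" "e2 = (u2,w2)" by fastforce
    have U1: "(u1,w1) \<in> U" and U2: "(u2,w2) \<in> U" using e unfolding S_def by auto
    show "e1 = e2"
      using e U1 U2 Uasym[OF U1] Uasym[OF U2] node_eqD unfolding S_def g_def
      by (auto split: if_splits) (metis node_eqD)+
  qed
  moreover have "finite S" using finU by (rule finite_subset[rotated]) (auto simp: S_def)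
  ultimately show ?thesis unfolding split_deg_def S_def[symmetric] by (simp add: card_image)
qed

sublocale sg: sgraph "split_adj U"
  by unfold_locales (use adj_sym adj_irr adj_fin cardN split_deg_le2 in auto)

lemma scp_iff: "split_component_path U xs \<longleftrightarrow> sg.scp xs"
  unfolding split_component_path_def sg.scp_def sg.deg_def cardN ..

definition "Qp a b \<longleftrightarrow> (a,b) \<in> F - F' \<or> (b,a) \<in> F' - F"

lemma QpU: "(a,b) \<in> U \<Longrightarrow> (Qp a b \<longleftrightarrow> (a,b) \<in> F) \<and> (Qp b a \<longleftrightarrow> (a,b) \<notin> F)"
  using Uasym[of a b] unfolding Qp_def U_def symdiff_def by blast

lemma mix4a: "(a,v) \<in> F - F' \<Longrightarrow> (v,c) \<in> F' - F \<Longrightarrow> degU U v = 4"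
proof -
  assume a: "(a,v) \<in> F - F'" and c: "(v,c) \<in> F' - F"
  have nR: "v \<notin> R" using a f1.noinR f1.FE by blast
  have nC: "v \<notin> C" using c f1.nooutC f2.FE by blast
  obtain d where d: "(v,d) \<in> F" using f1.mid[OF nR nC] a by blast
  obtain e where e: "(e,v) \<in> F'" using f2.mid[OF nR nC] c by blast
  have "card (inU v) = 2" using cin[of v] a e by blast
  moreover have "card (outU v) = 2" using cout[of v] c d by blast
  ultimately show ?thesis using deg4 by simp
qed

lemma mix4b: "(a,v) \<in> F' - F \<Longrightarrow> (v,c) \<in> F - F' \<Longrightarrow> degU U v = 4"
proof -
  assume a: "(a,v) \<in> F' - F" and c: "(v,c) \<in> F - F'"
  have nR: "v \<notin> R" using a f1.noinR f2.FE by blast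
  have nC: "v \<notin> C" using c f1.nooutC f1.FE by blast
  obtain d where d: "(v,d) \<in> F'" using f2.mid[OF nR nC] a by blast
  obtain e where e: "(e,v) \<in> F" using f1.mid[OF nR nC] c by blast
  have "card (inU v) = 2" using cin[of v] a e by blast
  moreover have "card (outU v) = 2" using cout[of v] c d by blast
  ultimately show ?thesis using deg4 by simp
qed

lemma UF: "(a,b) \<in> U \<Longrightarrow> (a,b) \<notin> F \<Longrightarrow> (a,b) \<in> F' - F"
  unfolding U_def symdiff_def by blast
lemma UF2: "(a,b) \<in> U \<Longrightarrow> (a,b) \<in> F \<Longrightarrow> (a,b) \<in> F - F'"
  unfolding U_def symdiff_def by blast

lemma in_mix: "(u,v) \<in> U \<Longrightarrow> (u',v) \<in> U \<Longrightarrow> u \<noteq> u' \<Longrightarrow> (u,v) \<in> F \<longleftrightarrow> (u',v) \<notin> F"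
  using f1.predu[of u v u'] f2.predu[of u v u'] UF[of u v] UF[of u' v] by blast

lemma out_mix: "(v,w) \<in> U \<Longrightarrow> (v,w') \<in> U \<Longrightarrow> w \<noteq> w' \<Longrightarrow> (v,w) \<in> F \<longleftrightarrow> (v,w') \<notin> F"
  using f1.succu[of v w w'] f2.succu[of v w w'] UF[of v w] UF[of v w'] by blast

lemma thru: "(u,v) \<in> U \<Longrightarrow> (v,w) \<in> U \<Longrightarrow> degU U v \<noteq> 4 \<Longrightarrow> (u,v) \<in> F \<longleftrightarrow> (v,w) \<in> F"
  using mix4a[of u v w] mix4b[of u v w] UF[of u v] UF[of v w] UF2[of u v] UF2[of v w] by blast

lemma node_TF: "node U v True = node U v False \<Longrightarrow> degU U v \<noteq> 4"
  unfolding node_def by simp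

lemma local_Q:
  assumes yx: "split_adj U y x" and xz: "split_adj U x z" and yz: "y \<noteq> z"
  shows "Qp (fst y) (fst x) = Qp (fst x) (fst z)"
proof -
  obtain u w where uw: "(u,w) \<in> U" "(y = node U u True \<and> x = node U w False) \<or> (x = node U u True \<and> y = node U w False)"
    using yx unfolding split_adj_def by blast
  obtain u' w' where uw': "(u',w') \<in> U" "(x = node U u' True \<and> z = node U w' False) \<or> (z = node U u' True \<and> x = node U w' False)"
    using xz unfolding split_adj_def by blast
  from uw(2) uw'(2) consider
      (c1) "y = node U u True" "x = node U w False" "z = node U u' True" "x = node U w' False"
    | (c2) "y = node U u True" "x = node U w False" "x = node U u' True" "z = node U w' False"
    | (c3) "x = node U u True" "y = node U w False" "x = node U u' True" "z = node U w' False"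
    | (c4) "x = node U u True" "y = node U w False" "z = node U u' True" "x = node U w' False"
    by blast
  then show ?thesis
  proof cases
    case c1
    then have "w = w'" using node_eqD by metis
    moreover have "u \<noteq> u'" using c1 yz by auto
    ultimately show ?thesis using c1 QpU[OF uw(1)] QpU[OF uw'(1)] in_mix[OF uw(1)] uw'(1) by auto
  next
    case c2
    then have "w = u'" using node_eqD by metis
    moreover have "degU U w \<noteq> 4" using c2 node_TF calculation by metis
    ultimately show ?thesis using c2 QpU[OF uw(1)] QpU[OF uw'(1)] thru[OF uw(1)] uw'(1) by auto
  next
    case c3
    then have "u = u'" using node_eqD by metis
    moreover have "w \<noteq> w'" using c3 yz by auto
    ultimately show ?thesis using c3 QpU[OF uw(1)] QpU[OF uw'(1)] out_mix[OF uw(1)] uw'(1) by auto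
  next
    case c4
    then have "u = w'" using node_eqD by metis
    moreover have "degU U u \<noteq> 4" using c4 node_TF calculation by metis
    ultimately show ?thesis using c4 QpU[OF uw(1)] QpU[OF uw'(1)] thru[OF _ uw(1)] uw'(1) by auto
  qed
qed

lemma path_Q:
  assumes "sg.scp xs"
  shows "Suc i < length xs \<Longrightarrow> Qp (fst (xs ! i)) (fst (xs ! Suc i)) = Qp (fst (xs ! 0)) (fst (xs ! 1))"
proof (induction i)
  case 0 then show ?case by simp
next
  case (Suc i)
  have "split_adj U (xs ! i) (xs ! Suc i)" "split_adj U (xs ! Suc i) (xs ! Suc (Suc i))"
    using sg.scp_adj[OF assms] Suc.prems by auto
  moreover have "xs ! i \<noteq> xs ! Suc (Suc i)" using assms Suc.prems unfolding sg.scp_def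
    by (simp add: nth_eq_iff_index_eq)
  ultimately show ?case using local_Q Suc by fastforce
qed

lemma adj_edge: "split_adj U x y \<Longrightarrow> (fst x, fst y) \<in> U \<or> (fst y, fst x) \<in> U"
  unfolding split_adj_def by auto

lemma Qfirst: "v \<in> D \<Longrightarrow> (v,b) \<in> U \<or> (b,v) \<in> U \<Longrightarrow> Qp v b \<longleftrightarrow> v \<in> (SI - SI') \<union> (TJ' - TJ)"
proof -
  assume vD: "v \<in> D" and e: "(v,b) \<in> U \<or> (b,v) \<in> U"
  from vD D_RC have "v \<in> R \<or> v \<in> C" by auto
  then show ?thesis
  proof
    assume R: "v \<in> R"
    then have e: "(v,b) \<in> U" using e UE f1.noinR by blast
    have nC: "v \<notin> TJ" "v \<notin> TJ'" using R f1.RC f1.TJC f2.TJC by auto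
    have "v \<in> SI \<longleftrightarrow> v \<notin> SI'" using vD nC unfolding D_def symdiff_def by auto
    moreover have "(v,b) \<in> F \<longrightarrow> v \<in> SI" "(v,b) \<in> F' \<longrightarrow> v \<in> SI'" using f1.src[OF R] f2.src[OF R] by auto
    moreover have "v \<in> SI \<longrightarrow> (v,b) \<in> F"
      using f2.src[OF R] UF[OF e] calculation by auto
    ultimately show ?thesis using QpU[OF e] nC by auto
  next
    assume C: "v \<in> C"
    then have e: "(b,v) \<in> U" using e UE f1.nooutC by blast
    have nR: "v \<notin> SI" "v \<notin> SI'" using C f1.RC f1.SIR f2.SIR by auto
    have "v \<in> TJ \<longleftrightarrow> v \<notin> TJ'" using vD nR unfolding D_def symdiff_def by auto
    moreover have "(b,v) \<in> F \<longrightarrow> v \<in> TJ" "(b,v) \<in> F' \<longrightarrow> v \<in> TJ'" using f1.snk[OF C] f2.snk[OF C] by auto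
    moreover have "v \<in> TJ \<longrightarrow> (b,v) \<in> F"
      using f2.snk[OF C] UF[OF e] calculation by auto
    ultimately show ?thesis using QpU[OF e] nR by auto
  qed
qed

lemma Qlast: "v \<in> D \<Longrightarrow> (v,a) \<in> U \<or> (a,v) \<in> U \<Longrightarrow> Qp a v \<longleftrightarrow> v \<in> (SI' - SI) \<union> (TJ - TJ')"
proof -
  assume vD: "v \<in> D" and e: "(v,a) \<in> U \<or> (a,v) \<in> U"
  from vD D_RC have "v \<in> R \<or> v \<in> C" by auto
  then show ?thesis
  proof
    assume R: "v \<in> R"
    then have e: "(v,a) \<in> U" using e UE f1.noinR by blast
    have nC: "v \<notin> TJ" "v \<notin> TJ'" using R f1.RC f1.TJC f2.TJC by auto
    have "v \<in> SI \<longleftrightarrow> v \<notin> SI'" using vD nC unfolding D_def symdiff_def by auto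
    moreover have "(v,a) \<in> F \<longrightarrow> v \<in> SI" "(v,a) \<in> F' \<longrightarrow> v \<in> SI'" using f1.src[OF R] f2.src[OF R] by auto
    moreover have "v \<in> SI \<longrightarrow> (v,a) \<in> F"
      using f2.src[OF R] UF[OF e] calculation by auto
    ultimately show ?thesis using QpU[OF e] nC by auto
  next
    assume C: "v \<in> C"
    then have e: "(a,v) \<in> U" using e UE f1.nooutC by blast
    have nR: "v \<notin> SI" "v \<notin> SI'" using C f1.RC f1.SIR f2.SIR by auto
    have "v \<in> TJ \<longleftrightarrow> v \<notin> TJ'" using vD nR unfolding D_def symdiff_def by auto
    moreover have "(a,v) \<in> F \<longrightarrow> v \<in> TJ" "(a,v) \<in> F' \<longrightarrow> v \<in> TJ'" using f1.snk[OF C] f2.snk[OF C] by auto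
    moreover have "v \<in> TJ \<longrightarrow> (a,v) \<in> F"
      using f2.snk[OF C] UF[OF e] calculation by auto
    ultimately show ?thesis using QpU[OF e] nR by auto
  qed
qed

lemma ends: "sg.scp xs \<Longrightarrow> hd xs = (fst (hd xs), False) \<and> fst (hd xs) \<in> D \<and>
   last xs = (fst (last xs), False) \<and> fst (last xs) \<in> D"
  unfolding sg.scp_def sg.deg_def cardN split_deg1 by (metis prod.collapse)

lemma finD: "finite D"
  using D_RC f1.finR f1.finC finite_subset by blast

definition "Ob = map fst ` {xs. sg.scp xs}"

lemma O_ends: "{v. \<exists>P\<in>Ob. v = hd P \<or> v = last P} = D"
proof (rule set_eqI, rule iffI)
  fix v assume "v \<in> {v. \<exists>P\<in>Ob. v = hd P \<or> v = last P}"
  then obtain P where "P \<in> Ob" "v = hd P \<or> v = last P" by auto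
  then obtain xs where xs: "sg.scp xs" "P = map fst xs" unfolding Ob_def by auto
  then have "xs \<noteq> []" unfolding sg.scp_def by auto
  then show "v \<in> D" using ends[OF xs(1)] \<open>v = hd P \<or> v = last P\<close> xs(2)
    by (auto simp: hd_map last_map)
next
  fix v assume "v \<in> D"
  then have "sg.deg (v,False) = 1" unfolding sg.deg_def cardN split_deg1 by simp
  then obtain xs where xs: "sg.scp xs" "hd xs = (v,False)" using sg.scp_exists by blast
  then have "xs \<noteq> []" unfolding sg.scp_def by auto
  then have "hd (map fst xs) = v" using xs by (simp add: hd_map)
  then show "v \<in> {v. \<exists>P\<in>Ob. v = hd P \<or> v = last P}" using xs unfolding Ob_def by auto
qed

lemma hd_bij: "bij_betw hd Ob D"
proof (rule bij_betwI')
  fix P Q assume "P \<in> Ob" "Q \<in> Ob"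
  then obtain xs ys where xs: "sg.scp xs" "P = map fst xs" and ys: "sg.scp ys" "Q = map fst ys"
    unfolding Ob_def by auto
  have ne: "xs \<noteq> []" "ys \<noteq> []" using xs ys unfolding sg.scp_def by auto
  show "hd P = hd Q \<longleftrightarrow> P = Q"
  proof
    assume "hd P = hd Q"
    then have "fst (hd xs) = fst (hd ys)" using xs ys ne by (simp add: hd_map)
    then have "hd xs = hd ys" using ends[OF xs(1)] ends[OF ys(1)] by metis
    then show "P = Q" using sg.scp_unique[OF xs(1) ys(1)] xs ys by simp
  qed simp
next
  fix P assume "P \<in> Ob" then show "hd P \<in> D" using O_ends by blast
next
  fix v assume "v \<in> D" then show "\<exists>P\<in>Ob. v = hd P" 
  proof -
    from \<open>v \<in> D\<close> have "sg.deg (v,False) = 1" unfolding sg.deg_def cardN split_deg1 by simp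
    then obtain xs where xs: "sg.scp xs" "hd xs = (v,False)" using sg.scp_exists by blast
    then have "xs \<noteq> []" unfolding sg.scp_def by auto
    then have "hd (map fst xs) = v" using xs by (simp add: hd_map)
    then show ?thesis using xs unfolding Ob_def by auto
  qed
qed

lemma O_rev: "P \<in> Ob \<Longrightarrow> rev P \<in> Ob \<and> rev P \<noteq> P"
proof -
  assume "P \<in> Ob"
  then obtain xs where xs: "sg.scp xs" "P = map fst xs" unfolding Ob_def by auto
  have "rev P = map fst (rev xs)" using xs by (simp add: rev_map)
  then have "rev P \<in> Ob" using sg.scp_rev[OF xs(1)] unfolding Ob_def by auto
  moreover have "hd P \<noteq> last P"
  proof
    assume "hd P = last P"
    have ne: "xs \<noteq> []" using xs unfolding sg.scp_def by auto
    have "fst (hd xs) = fst (last xs)" using \<open>hd P = last P\<close> xs ne by (simp add: hd_map last_map)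
    then have "hd xs = last xs" using ends[OF xs(1)] by metis
    then show False using sg.scp_hd_last[OF xs(1)] by simp
  qed
  moreover have "P \<noteq> []" using xs unfolding sg.scp_def by auto
  moreover have "hd (rev P) = last P" using \<open>P \<noteq> []\<close> by (simp add: hd_rev)
  ultimately show ?thesis by auto
qed

lemma count: "2 * card ((\<lambda>P. {P, rev P}) ` Ob) = card D"
proof -
  have finO: "finite Ob" using hd_bij finD bij_betw_finite by blast
  have "2 * card ((\<lambda>P. {P, rev P}) ` Ob) = card (\<Union> ((\<lambda>P. {P, rev P}) ` Ob))"
  proof (rule card_partition)
    show "finite ((\<lambda>P. {P, rev P}) ` Ob)" using finO by simp
    show "finite (\<Union> ((\<lambda>P. {P, rev P}) ` Ob))" using finO by simp
    show "\<And>c. c \<in> (\<lambda>P. {P, rev P}) ` Ob \<Longrightarrow> card c = 2" using O_rev by (metis (no_types, lifting) card_2_iff imageE)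
    show "\<And>c1 c2. c1 \<in> (\<lambda>P. {P, rev P}) ` Ob \<Longrightarrow> c2 \<in> (\<lambda>P. {P, rev P}) ` Ob \<Longrightarrow> c1 \<noteq> c2 \<Longrightarrow> c1 \<inter> c2 = {}"
      by auto
  qed
  also have "\<Union> ((\<lambda>P. {P, rev P}) ` Ob) = Ob" using O_rev by (auto simp: card_insert_if)
  also have "card Ob = card D" using hd_bij by (rule bij_betw_same_card)
  finally show ?thesis .
qed

lemma orient: "P \<in> Ob \<Longrightarrow> \<exists>s::bool. \<forall>(a,b)\<in>set (zip P (tl P)).
           ((a,b) \<in> F - F' \<longrightarrow> s) \<and> ((a,b) \<in> F' - F \<longrightarrow> \<not> s) \<and>
           ((b,a) \<in> F - F' \<longrightarrow> \<not> s) \<and> ((b,a) \<in> F' - F \<longrightarrow> s)"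
proof -
  assume "P \<in> Ob"
  then obtain xs where xs: "sg.scp xs" "P = map fst xs" unfolding Ob_def by auto
  have ab: "Qp a b = Qp (P ! 0) (P ! 1)" if "(a,b) \<in> set (zip P (tl P))" for a b
  proof -
    have "\<exists>i. P ! i = a \<and> tl P ! i = b \<and> i < length P \<and> i < length (tl P)"
      using that by (simp only: in_set_zip fst_conv snd_conv)
    then obtain i where i: "i < length P" "i < length (tl P)" "P ! i = a" "tl P ! i = b"
      by blast
    have "Suc i < length xs" using i xs by simp
    moreover have "2 \<le> length xs" using xs(1) unfolding sg.scp_def by simp
    moreover have "0 < length xs" using \<open>Suc i < length xs\<close> by linarith
    moreover have "P ! 0 = fst (xs ! 0)" using xs(2) nth_map[OF calculation(3), of fst] by simp
    ultimately show ?thesis using path_Q[OF xs(1), of i] i xs by (simp add: nth_tl)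
  qed
  have FE: "F \<subseteq> E" "F' \<subseteq> E" using f1.FE f2.FE .
  show ?thesis
  proof (rule exI[of _ "Qp (P ! 0) (P ! 1)"], safe)
    fix a b assume "(a,b) \<in> set (zip P (tl P))"
    note q = ab[OF this]
    { assume "(a,b) \<in> F" "(a,b) \<notin> F'" then show "Qp (P ! 0) (P ! 1)" using q unfolding Qp_def by blast }
    { assume "(a,b) \<in> F'" "(a,b) \<notin> F" "Qp (P ! 0) (P ! 1)" then show False
        using q f1.asym[of a b] FE unfolding Qp_def by blast }
    { assume "(b,a) \<in> F" "(b,a) \<notin> F'" "Qp (P ! 0) (P ! 1)" then show False
        using q f1.asym[of a b] FE unfolding Qp_def by blast }
    { assume "(b,a) \<in> F'" "(b,a) \<notin> F" then show "Qp (P ! 0) (P ! 1)" using q unfolding Qp_def by blast }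
  qed
qed

lemma conn: "P \<in> Ob \<Longrightarrow> hd P \<in> D \<and> last P \<in> D \<and>
   (hd P \<in> (SI - SI') \<union> (TJ' - TJ) \<longleftrightarrow> last P \<in> (SI' - SI) \<union> (TJ - TJ'))"
proof -
  assume "P \<in> Ob"
  then obtain xs where xs: "sg.scp xs" "P = map fst xs" unfolding Ob_def by auto
  define n where "n = length xs"
  have n2: "n \<ge> 2" using xs unfolding sg.scp_def n_def by auto
  have hdD: "hd P \<in> D" "last P \<in> D" using O_ends \<open>P \<in> Ob\<close> by blast+
  have Pne: "P \<noteq> []" "length P = n" using n2 xs n_def by auto
  have hP: "hd P = P ! 0" and lP: "last P = P ! (n - 1)" using Pne
    by (auto simp: hd_conv_nth last_conv_nth)
  have e1: "split_adj U (xs ! 0) (xs ! 1)" using sg.scp_adj[OF xs(1), of 0] n2 n_def by simp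
  have e2: "split_adj U (xs ! (n-2)) (xs ! Suc (n-2))" using sg.scp_adj[OF xs(1), of "n-2"] n2 n_def by simp
  have sn: "Suc (n - 2) = n - 1" using n2 by simp
  have p0: "P ! 0 = fst (xs ! 0)" "P ! 1 = fst (xs ! 1)" "P!(n-2) = fst (xs!(n-2))" "P!(n-1) = fst(xs!(n-1))"
  proof -
    have l: "0 < length xs" "1 < length xs" "n - 2 < length xs" "n - 1 < length xs" using n2 n_def by linarith+
    show "P ! 0 = fst (xs ! 0)" "P ! 1 = fst (xs ! 1)" "P!(n-2) = fst (xs!(n-2))" "P!(n-1) = fst(xs!(n-1))"
      using xs(2) nth_map[OF l(1)] nth_map[OF l(2)] nth_map[OF l(3)] nth_map[OF l(4)] by simp_all
  qed
  have ed1: "(P!0, P!1) \<in> U \<or> (P!1, P!0) \<in> U" using adj_edge[OF e1] p0 by simp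
  have ed2: "(P!(n-1), P!(n-2)) \<in> U \<or> (P!(n-2), P!(n-1)) \<in> U" using adj_edge[OF e2] p0 sn by auto
  have q1: "Qp (P!0) (P!1) \<longleftrightarrow> hd P \<in> (SI - SI') \<union> (TJ' - TJ)"
    using Qfirst[of "P!0" "P!1"] ed1 hdD(1) unfolding hP by blast
  have q2: "Qp (P!(n-2)) (P!(n-1)) \<longleftrightarrow> last P \<in> (SI' - SI) \<union> (TJ - TJ')"
    using Qlast[of "P!(n-1)" "P!(n-2)"] ed2 hdD(2) unfolding lP by blast
  have "Qp (P!(n-2)) (P!(n-1)) = Qp (P!0) (P!1)"
    using path_Q[OF xs(1), of "n-2"] p0 n2 n_def sn by simp
  then show ?thesis using q1 q2 hdD by simp
qed

lemma tst: "2 \<le> length (xs::('v \<times> bool) list) \<Longrightarrow> map fst xs ! 0 = fst (xs ! 0)"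
  apply (rule nth_map) by (cases xs) auto
end



lemma path_edges_iff: "(a,b) \<in> path_edges P \<longleftrightarrow> (\<exists>i. Suc i < length P \<and> P ! i = a \<and> P ! Suc i = b)"
proof -
  have "(a,b) \<in> path_edges P \<longleftrightarrow> (\<exists>i. P ! i = a \<and> tl P ! i = b \<and> i < length P \<and> i < length (tl P))"
    unfolding path_edges_def by (simp only: in_set_zip fst_conv snd_conv)
  also have "\<dots> \<longleftrightarrow> (\<exists>i. Suc i < length P \<and> P ! i = a \<and> P ! Suc i = b)"
  proof (rule iffI; elim exE conjE)
    fix i assume i: "P ! i = a" "tl P ! i = b" "i < length P" "i < length (tl P)"
    then have "Suc i < length P" by simp
    moreover have "P ! Suc i = b" using i nth_tl[OF i(4)] by simp
    ultimately show "\<exists>i. Suc i < length P \<and> P ! i = a \<and> P ! Suc i = b" using i by blast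
  next
    fix i assume i: "Suc i < length P" "P ! i = a" "P ! Suc i = b"
    then have l: "i < length (tl P)" by simp
    then show "\<exists>i. P ! i = a \<and> tl P ! i = b \<and> i < length P \<and> i < length (tl P)"
      using i nth_tl[OF l] by (intro exI[of _ i]) simp
  qed
  finally show ?thesis .
qed


lemma SE_c1: "SE_graph V E pos m n r c \<Longrightarrow> finite V" unfolding SE_graph_def by (elim conjE) assumption
lemma SE_c2: "SE_graph V E pos m n r c \<Longrightarrow> E \<subseteq> V \<times> V" unfolding SE_graph_def by (elim conjE) assumption
lemma SE_c3: "SE_graph V E pos m n r c \<Longrightarrow> (\<forall>(u,v)\<in>E. (snd (pos u) = snd (pos v) \<and> fst (pos u) < fst (pos v)) \<or>
                 (fst (pos u) = fst (pos v) \<and> snd (pos u) > snd (pos v)))" unfolding SE_graph_def by (elim conjE) assumption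
lemma SE_c4: "SE_graph V E pos m n r c \<Longrightarrow> r ` {1..m} \<inter> c ` {1..n} = {}" unfolding SE_graph_def by (elim conjE) assumption
lemma SE_c5: "SE_graph V E pos m n r c \<Longrightarrow> (\<forall>i\<in>{1..m}. \<forall>i'\<in>{1..m}. fst (pos (r i)) = fst (pos (r i')) \<and>
                                   (i < i' \<longrightarrow> snd (pos (r i)) < snd (pos (r i'))))" unfolding SE_graph_def by (elim conjE) assumption
lemma SE_c6: "SE_graph V E pos m n r c \<Longrightarrow> (\<forall>j\<in>{1..n}. \<forall>j'\<in>{1..n}. snd (pos (c j)) = snd (pos (c j')) \<and>
                                   (j < j' \<longrightarrow> fst (pos (c j)) < fst (pos (c j'))))" unfolding SE_graph_def by (elim conjE) assumption
lemma SE_c7: "SE_graph V E pos m n r c \<Longrightarrow> (\<forall>i\<in>{1..m}. \<forall>(u,v)\<in>E. (u = r i \<or> v = r i) \<longrightarrow> snd (pos u) = snd (pos v))" unfolding SE_graph_def by (elim conjE) assumption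
lemma SE_c8: "SE_graph V E pos m n r c \<Longrightarrow> (\<forall>j\<in>{1..n}. \<forall>(u,v)\<in>E. (u = c j \<or> v = c j) \<longrightarrow> fst (pos u) = fst (pos v))" unfolding SE_graph_def by (elim conjE) assumption
lemma SE_c9: "SE_graph V E pos m n r c \<Longrightarrow> (\<forall>v\<in>V. \<exists>i\<in>{1..m}. \<exists>j\<in>{1..n}. (r i, v) \<in> E\<^sup>* \<and> (v, c j) \<in> E\<^sup>*)" unfolding SE_graph_def by (elim conjE) assumption

lemma SE_edge: "SE_graph V E pos m n r c \<Longrightarrow> (u,v) \<in> E \<Longrightarrow> (snd (pos u) = snd (pos v) \<and> fst (pos u) < fst (pos v)) \<or>
                 (fst (pos u) = fst (pos v) \<and> snd (pos u) > snd (pos v))"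
  using SE_c3 by fastforce

lemma SE_fst_mono:
  assumes G: "SE_graph V E pos m n r c" and "(x,y) \<in> E\<^sup>*"
  shows "fst (pos x) \<le> fst (pos y)"
  using assms(2)
proof (induction rule: rtrancl_induct)
  case (step y z)
  then have "fst (pos y) \<le> fst (pos z)" using SE_edge[OF G step(2)] by linarith
  then show ?case using step by linarith
qed simp

lemma SE_snd_mono:
  assumes G: "SE_graph V E pos m n r c" and "(x,y) \<in> E\<^sup>*"
  shows "snd (pos y) \<le> snd (pos x)"
  using assms(2)
proof (induction rule: rtrancl_induct)
  case (step y z)
  then have "snd (pos z) \<le> snd (pos y)" using SE_edge[OF G step(2)] by linarith
  then show ?case using step by linarith
qed simp

lemma SE_asym: "SE_graph V E pos m n r c \<Longrightarrow> (a,b) \<in> E \<Longrightarrow> (b,a) \<notin> E"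
proof
  assume G: "SE_graph V E pos m n r c" and e: "(a,b) \<in> E" "(b,a) \<in> E"
  from SE_edge[OF G e(1)] SE_edge[OF G e(2)] show False by linarith
qed

lemma SE_noin:
  assumes G: "SE_graph V E pos m n r c" and i: "i \<in> {1..m}"
  shows "(a, r i) \<notin> E"
proof
  assume e: "(a, r i) \<in> E"
  have aV: "a \<in> V" using e SE_c2[OF G] by auto
  then obtain i' where i': "i' \<in> {1..m}" "(r i', a) \<in> E\<^sup>*" using SE_c9[OF G] by blast
  have "fst (pos (r i')) \<le> fst (pos a)" using SE_fst_mono[OF G i'(2)] .
  moreover have "fst (pos (r i')) = fst (pos (r i))" using SE_c5[OF G] i i' by blast
  moreover have "snd (pos a) = snd (pos (r i))" using SE_c7[OF G] i e by fastforce
  moreover note SE_edge[OF G e]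
  ultimately show False by linarith
qed

lemma SE_noout:
  assumes G: "SE_graph V E pos m n r c" and j: "j \<in> {1..n}"
  shows "(c j, b) \<notin> E"
proof
  assume e: "(c j, b) \<in> E"
  have bV: "b \<in> V" using e SE_c2[OF G] by auto
  then obtain j' where j': "j' \<in> {1..n}" "(b, c j') \<in> E\<^sup>*" using SE_c9[OF G] by blast
  have "snd (pos (c j')) \<le> snd (pos b)" using SE_snd_mono[OF G j'(2)] .
  moreover have "snd (pos (c j')) = snd (pos (c j))" using SE_c6[OF G] j j' by blast
  moreover have "fst (pos b) = fst (pos (c j))" using SE_c8[OF G] j e by fastforce
  moreover note SE_edge[OF G e]
  ultimately show False by linarith
qed

lemma SE_inj_r: "SE_graph V E pos m n r c \<Longrightarrow> inj_on r {1..m}"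
  using SE_c5 unfolding inj_on_def by (metis linorder_neqE_nat order_less_irrefl)

lemma SE_inj_c: "SE_graph V E pos m n r c \<Longrightarrow> inj_on c {1..n}"
  using SE_c6 unfolding inj_on_def by (metis linorder_neqE_nat order_less_irrefl)

lemma flow_flow1:
  assumes G: "SE_graph V E pos m n r c" and IJ: "pairs_E m n I J"
    and phi: "is_flow E r c I J \<Phi>"
  shows "flow1 E (flow_edges \<Phi>) (r ` {1..m}) (c ` {1..n}) (r ` I) (c ` J)"
proof -
  have Isub: "I \<subseteq> {1..m}" and Jsub: "J \<subseteq> {1..n}" using IJ unfolding pairs_E_def by auto
  have paths: "\<And>P. P \<in> \<Phi> \<Longrightarrow> dpath E P \<and> hd P \<in> r ` I \<and> last P \<in> c ` J"
    and disj: "\<And>P Q. P \<in> \<Phi> \<Longrightarrow> Q \<in> \<Phi> \<Longrightarrow> P \<noteq> Q \<Longrightarrow> set P \<inter> set Q = {}"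
    and cov: "r ` I \<subseteq> hd ` \<Phi>" "c ` J \<subseteq> last ` \<Phi>"
  proof -
    have ph: "finite \<Phi> \<and> (\<forall>P\<in>\<Phi>. dpath E P \<and> hd P \<in> r ` I \<and> last P \<in> c ` J) \<and>
     (\<forall>P\<in>\<Phi>. \<forall>Q\<in>\<Phi>. P \<noteq> Q \<longrightarrow> set P \<inter> set Q = {}) \<and>
     r ` I \<subseteq> hd ` \<Phi> \<and> c ` J \<subseteq> last ` \<Phi>" using phi unfolding is_flow_def by (elim conjE) (intro conjI; assumption)
    have p2: "\<forall>P\<in>\<Phi>. dpath E P \<and> hd P \<in> r ` I \<and> last P \<in> c ` J" using ph by (elim conjE) assumption
    have p3: "\<forall>P\<in>\<Phi>. \<forall>Q\<in>\<Phi>. P \<noteq> Q \<longrightarrow> set P \<inter> set Q = {}" using ph by (elim conjE) assumption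
    show "r ` I \<subseteq> hd ` \<Phi>" using ph by (elim conjE) assumption
    show "c ` J \<subseteq> last ` \<Phi>" using ph by (elim conjE) assumption
    show "\<And>P. P \<in> \<Phi> \<Longrightarrow> dpath E P \<and> hd P \<in> r ` I \<and> last P \<in> c ` J" using p2 by (rule bspec)
    show "\<And>P Q. P \<in> \<Phi> \<Longrightarrow> Q \<in> \<Phi> \<Longrightarrow> P \<noteq> Q \<Longrightarrow> set P \<inter> set Q = {}" using p3 by simp
  qed
  have RC: "r ` {1..m} \<inter> c ` {1..n} = {}" using SE_c4[OF G] .
  have noin: "v \<in> r ` {1..m} \<Longrightarrow> (a,v) \<notin> E" for v a using SE_noin[OF G] by (elim imageE) simp
  have noout: "v \<in> c ` {1..n} \<Longrightarrow> (v,b) \<notin> E" for v b using SE_noout[OF G] by (elim imageE) simp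
  have Fiff: "(a,b) \<in> flow_edges \<Phi> \<longleftrightarrow> (\<exists>P\<in>\<Phi>. \<exists>i. Suc i < length P \<and> P ! i = a \<and> P ! Suc i = b)" for a b
    unfolding flow_edges_def UN_iff path_edges_iff ..
  have PE: "P \<in> \<Phi> \<Longrightarrow> Suc i < length P \<Longrightarrow> (P ! i, P ! Suc i) \<in> E" for P i
    using paths[of P] unfolding dpath_def by (auto intro: successively_nth)
  have dist: "P \<in> \<Phi> \<Longrightarrow> distinct P" for P using paths[of P] unfolding dpath_def by auto
  have ne: "P \<in> \<Phi> \<Longrightarrow> P \<noteq> []" for P using paths[of P] unfolding dpath_def by auto
  have same: "P \<in> \<Phi> \<Longrightarrow> Q \<in> \<Phi> \<Longrightarrow> i < length P \<Longrightarrow> j < length Q \<Longrightarrow> P ! i = Q ! j \<Longrightarrow> P = Q \<and> i = j" for P Q i j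
  proof -
    assume a: "P \<in> \<Phi>" "Q \<in> \<Phi>" "i < length P" "j < length Q" "P ! i = Q ! j"
    have "P = Q"
    proof (rule ccontr)
      assume "P \<noteq> Q"
      then have "set P \<inter> set Q = {}" using disj[OF a(1,2)] by simp
      moreover have "P ! i \<in> set P \<inter> set Q" using a by (metis IntI nth_mem)
      ultimately show False by simp
    qed
    then show ?thesis using a dist[of P] by (simp add: nth_eq_iff_index_eq)
  qed
  have hdR: "P \<in> \<Phi> \<Longrightarrow> P ! 0 \<in> r ` I" for P using paths[of P] ne[of P] by (simp add: hd_conv_nth)
  have lastC: "P \<in> \<Phi> \<Longrightarrow> P ! (length P - 1) \<in> c ` J" for P using paths[of P] ne[of P] by (simp add: last_conv_nth)
  have FsubE: "flow_edges \<Phi> \<subseteq> E"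
  proof
    fix e assume "e \<in> flow_edges \<Phi>"
    then obtain a b where ab: "e = (a,b)" "(a,b) \<in> flow_edges \<Phi>" by (cases e) auto
    then obtain P i where "P \<in> \<Phi>" "Suc i < length P" "P ! i = a" "P ! Suc i = b" using Fiff by blast
    then show "e \<in> E" using PE ab by blast
  qed
  have rI: "r ` I \<subseteq> r ` {1..m}" using Isub by auto
  have cJ: "c ` J \<subseteq> c ` {1..n}" using Jsub by auto
  show ?thesis
  proof (rule flow1.intro)
    show "finite E" using SE_c1[OF G] SE_c2[OF G] by (meson finite_SigmaI finite_subset)
    show "(a,b) \<in> E \<Longrightarrow> (b,a) \<notin> E" for a b using SE_asym[OF G] by blast
    show "flow_edges \<Phi> \<subseteq> E" by (fact FsubE)
    show "v \<in> r ` {1..m} \<Longrightarrow> (a,v) \<notin> E" for v a by (rule noin)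
    show "v \<in> c ` {1..n} \<Longrightarrow> (v,b) \<notin> E" for v b by (rule noout)
    show "r ` {1..m} \<inter> c ` {1..n} = {}" by (rule RC)
    show "finite (r ` {1..m})" "finite (c ` {1..n})" by auto
    show "r ` I \<subseteq> r ` {1..m}" "c ` J \<subseteq> c ` {1..n}" by (fact rI, fact cJ)
    show "a = a'" if h: "(a,v) \<in> flow_edges \<Phi>" "(a',v) \<in> flow_edges \<Phi>" for a a' v
    proof -
      obtain P i where P: "P \<in> \<Phi>" "Suc i < length P" "P ! i = a" "P ! Suc i = v" using h(1) unfolding Fiff by blast
      obtain Q j where Q: "Q \<in> \<Phi>" "Suc j < length Q" "Q ! j = a'" "Q ! Suc j = v" using h(2) unfolding Fiff by blast
      have "P = Q \<and> Suc i = Suc j" using same[of P Q "Suc i" "Suc j"] P Q by simp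
      then show ?thesis using P Q by simp
    qed
    show "b = b'" if h: "(v,b) \<in> flow_edges \<Phi>" "(v,b') \<in> flow_edges \<Phi>" for b b' v
    proof -
      obtain P i where P: "P \<in> \<Phi>" "Suc i < length P" "P ! i = v" "P ! Suc i = b" using h(1) unfolding Fiff by blast
      obtain Q j where Q: "Q \<in> \<Phi>" "Suc j < length Q" "Q ! j = v" "Q ! Suc j = b'" using h(2) unfolding Fiff by blast
      have "P = Q \<and> i = j" using same[of P Q i j] P Q by simp
      then show ?thesis using P Q by simp
    qed
    have outin: "(v,b) \<in> flow_edges \<Phi> \<Longrightarrow> v \<notin> r ` I \<Longrightarrow> \<exists>a. (a,v) \<in> flow_edges \<Phi>" for v b
    proof -
      assume vb: "(v,b) \<in> flow_edges \<Phi>" and nv: "v \<notin> r ` I"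
      obtain P i where P: "P \<in> \<Phi>" "Suc i < length P" "P ! i = v" "P ! Suc i = b" using vb unfolding Fiff by blast
      have "i \<noteq> 0" using hdR[OF P(1)] P nv by auto
      then obtain i' where i': "i = Suc i'" by (cases i) auto
      then have "(P ! i', v) \<in> flow_edges \<Phi>" unfolding Fiff using P by (intro bexI[of _ P] exI[of _ i']) auto
      then show ?thesis by blast
    qed
    have inout: "(a,v) \<in> flow_edges \<Phi> \<Longrightarrow> v \<notin> c ` J \<Longrightarrow> \<exists>b. (v,b) \<in> flow_edges \<Phi>" for v a
    proof -
      assume av: "(a,v) \<in> flow_edges \<Phi>" and nv: "v \<notin> c ` J"
      obtain P i where P: "P \<in> \<Phi>" "Suc i < length P" "P ! i = a" "P ! Suc i = v" using av unfolding Fiff by blast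
      have "Suc i \<noteq> length P - 1" using lastC[OF P(1)] P nv by auto
      then have "Suc (Suc i) < length P" using P by linarith
      then have "(v, P ! Suc (Suc i)) \<in> flow_edges \<Phi>" unfolding Fiff using P by (intro bexI[of _ P] exI[of _ "Suc i"]) auto
      then show ?thesis by blast
    qed
    have start: "v \<in> r ` I \<Longrightarrow> \<exists>b. (v,b) \<in> flow_edges \<Phi>" for v
    proof -
      assume v: "v \<in> r ` I"
      then obtain P where P: "P \<in> \<Phi>" "v = hd P" using cov by auto
      have "length P \<noteq> 1"
      proof
        assume "length P = 1"
        then have "last P = hd P" using ne[OF P(1)] by (cases P) auto
        then have "v \<in> c ` J" using paths[OF P(1)] P by simp
        then show False using v rI cJ RC by blast
      qed
      then have "Suc 0 < length P" using ne[OF P(1)] by (cases P) auto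
      then show ?thesis using Fiff P ne[OF P(1)] by (metis hd_conv_nth)
    qed
    have finish: "v \<in> c ` J \<Longrightarrow> \<exists>a. (a,v) \<in> flow_edges \<Phi>" for v
    proof -
      assume v: "v \<in> c ` J"
      then obtain P where P: "P \<in> \<Phi>" "v = last P" using cov by auto
      have "length P \<noteq> 1"
      proof
        assume "length P = 1"
        then have "last P = hd P" using ne[OF P(1)] by (cases P) auto
        then have "v \<in> r ` I" using paths[OF P(1)] P by simp
        then show False using v rI cJ RC by blast
      qed
      then have l: "Suc (length P - 2) < length P" "Suc (length P - 2) = length P - 1"
        using ne[OF P(1)] by (cases P; auto)+
      then show ?thesis using Fiff P ne[OF P(1)] by (metis last_conv_nth)
    qed
    show "v \<in> r ` {1..m} \<Longrightarrow> (\<exists>b. (v,b) \<in> flow_edges \<Phi>) \<longleftrightarrow> v \<in> r ` I" for v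
      using outin[of v] start[of v] noin[of v] FsubE by blast
    show "v \<in> c ` {1..n} \<Longrightarrow> (\<exists>a. (a,v) \<in> flow_edges \<Phi>) \<longleftrightarrow> v \<in> c ` J" for v
      using inout[of _ v] finish[of v] noout[of v] FsubE by blast
    show "v \<notin> r ` {1..m} \<Longrightarrow> v \<notin> c ` {1..n} \<Longrightarrow> (\<exists>a. (a,v) \<in> flow_edges \<Phi>) \<longleftrightarrow> (\<exists>b. (v,b) \<in> flow_edges \<Phi>)" for v
      using inout[of _ v] outin[of v] rI cJ by blast
  qed
qed




theorem lemma4p1:
  fixes V :: "'v set" and E :: "('v \<times> 'v) set" and pos :: "'v \<Rightarrow> real \<times> real"
    and m n :: nat and r c :: "nat \<Rightarrow> 'v"
    and I J I' J' :: "nat set" and \<Phi> \<Phi>' :: "'v list set"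
  assumes G: "SE_graph V E pos m n r c"
    and IJ: "pairs_E m n I J" and IJ': "pairs_E m n I' J'"
    and phi: "is_flow E r c I J \<Phi>" and phi': "is_flow E r c I' J' \<Phi>'"
  defines "Io \<equiv> I - I'" and "Ib \<equiv> I' - I" and "Jo \<equiv> J - J'" and "Jb \<equiv> J' - J"
    and "k \<equiv> card (exchange_paths \<Phi> \<Phi>')"
  shows "real k = real (card Io + card Ib + card Jo + card Jb) / 2
    \<and> {v. \<exists>P\<in>oriented_exchange_paths \<Phi> \<Phi>'. v = hd P \<or> v = last P}
        = r ` (Io \<union> Ib) \<union> c ` (Jo \<union> Jb)
    \<and> (\<forall>P\<in>oriented_exchange_paths \<Phi> \<Phi>'.
         let conn = (\<lambda>A B. (hd P \<in> A \<and> last P \<in> B) \<or> (hd P \<in> B \<and> last P \<in> A)) in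
         conn (r ` Io) (r ` Ib) \<or> conn (c ` Jo) (c ` Jb) \<or>
         conn (r ` Io) (c ` Jo) \<or> conn (r ` Ib) (c ` Jb))
    \<and> (\<forall>P\<in>oriented_exchange_paths \<Phi> \<Phi>'. \<exists>s::bool.
         \<forall>(a,b)\<in>set (zip P (tl P)).
           ((a,b) \<in> flow_edges \<Phi> - flow_edges \<Phi>' \<longrightarrow> s) \<and>
           ((a,b) \<in> flow_edges \<Phi>' - flow_edges \<Phi> \<longrightarrow> \<not> s) \<and>
           ((b,a) \<in> flow_edges \<Phi> - flow_edges \<Phi>' \<longrightarrow> \<not> s) \<and>
           ((b,a) \<in> flow_edges \<Phi>' - flow_edges \<Phi> \<longrightarrow> s))"
proof -
  have Isub: "I \<subseteq> {1..m}" "J \<subseteq> {1..n}" using IJ unfolding pairs_E_def by auto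
  have Isub': "I' \<subseteq> {1..m}" "J' \<subseteq> {1..n}" using IJ' unfolding pairs_E_def by auto
  interpret dflow E "flow_edges \<Phi>" "flow_edges \<Phi>'" "r ` {1..m}" "c ` {1..n}" "r ` I" "c ` J" "r ` I'" "c ` J'"
    by (rule dflow.intro[OF flow_flow1[OF G IJ phi] flow_flow1[OF G IJ' phi']])
  have injr: "inj_on r {1..m}" using SE_inj_r[OF G] .
  have injc: "inj_on c {1..n}" using SE_inj_c[OF G] .
  have RC: "r ` {1..m} \<inter> c ` {1..n} = {}" using SE_c4[OF G] .
  have OE: "oriented_exchange_paths \<Phi> \<Phi>' = Ob"
    unfolding oriented_exchange_paths_def Ob_def U_def[symmetric] scp_iff by blast
  have rIo: "r ` I - r ` I' = r ` Io" unfolding Io_def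
    by (rule inj_on_image_set_diff[OF injr, symmetric]) (use Isub(1) Isub'(1) in auto)
  have rIb: "r ` I' - r ` I = r ` Ib" unfolding Ib_def
    by (rule inj_on_image_set_diff[OF injr, symmetric]) (use Isub'(1) Isub(1) in auto)
  have cJo: "c ` J - c ` J' = c ` Jo" unfolding Jo_def
    by (rule inj_on_image_set_diff[OF injc, symmetric]) (use Isub(2) Isub'(2) in auto)
  have cJb: "c ` J' - c ` J = c ` Jb" unfolding Jb_def
    by (rule inj_on_image_set_diff[OF injc, symmetric]) (use Isub'(2) Isub(2) in auto)
  have Dform: "D = r ` (Io \<union> Ib) \<union> c ` (Jo \<union> Jb)"
    unfolding D_def symdiff_def rIo rIb cJo cJb by auto
  have sub: "Io \<subseteq> {1..m}" "Ib \<subseteq> {1..m}" "Jo \<subseteq> {1..n}" "Jb \<subseteq> {1..n}"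
    unfolding Io_def Ib_def Jo_def Jb_def using Isub Isub' by auto
  have fins: "finite Io" "finite Ib" "finite Jo" "finite Jb"
    using sub by (auto intro: finite_subset)
  have dIJ: "Io \<inter> Ib = {}" "Jo \<inter> Jb = {}" unfolding Io_def Ib_def Jo_def Jb_def by auto
  have cr: "card (r ` (Io \<union> Ib)) = card Io + card Ib"
  proof -
    have "inj_on r (Io \<union> Ib)" using injr sub by (auto intro: inj_on_subset)
    then have "card (r ` (Io \<union> Ib)) = card (Io \<union> Ib)" by (rule card_image)
    also have "\<dots> = card Io + card Ib" using fins dIJ by (simp add: card_Un_disjoint)
    finally show ?thesis .
  qed
  have cc: "card (c ` (Jo \<union> Jb)) = card Jo + card Jb"
  proof -
    have "inj_on c (Jo \<union> Jb)" using injc sub by (auto intro: inj_on_subset)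
    then have "card (c ` (Jo \<union> Jb)) = card (Jo \<union> Jb)" by (rule card_image)
    also have "\<dots> = card Jo + card Jb" using fins dIJ by (simp add: card_Un_disjoint)
    finally show ?thesis .
  qed
  have drc: "r ` (Io \<union> Ib) \<inter> c ` (Jo \<union> Jb) = {}" using RC sub by blast
  have cardD: "card D = card Io + card Ib + card Jo + card Jb"
    unfolding Dform using cr cc drc fins by (simp add: card_Un_disjoint)
  have p1: "real k = real (card Io + card Ib + card Jo + card Jb) / 2"
  proof -
    have "2 * k = card D" unfolding k_def exchange_paths_def OE by (rule count)
    then have eq: "2 * k = card Io + card Ib + card Jo + card Jb" unfolding cardD .
    have "real (card Io + card Ib + card Jo + card Jb) = 2 * real k" unfolding eq[symmetric] by simp
    then show ?thesis by simp
  qed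
  have p2: "{v. \<exists>P\<in>oriented_exchange_paths \<Phi> \<Phi>'. v = hd P \<or> v = last P}
        = r ` (Io \<union> Ib) \<union> c ` (Jo \<union> Jb)"
    unfolding OE O_ends Dform ..
  have dis4: "r ` Io \<inter> r ` Ib = {}" "r ` Io \<inter> c ` Jb = {}" "c ` Jo \<inter> c ` Jb = {}" "c ` Jo \<inter> r ` Ib = {}"
    "r ` Io \<inter> c ` Jo = {}" "r ` Ib \<inter> c ` Jb = {}"
  proof -
    have s: "r ` Io \<subseteq> r ` {1..m}" "r ` Ib \<subseteq> r ` {1..m}" "c ` Jo \<subseteq> c ` {1..n}" "c ` Jb \<subseteq> c ` {1..n}"
      using sub by (simp_all add: image_mono)
    show "r ` Io \<inter> r ` Ib = {}" unfolding rIo[symmetric] rIb[symmetric] by blast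
    show "c ` Jo \<inter> c ` Jb = {}" unfolding cJo[symmetric] cJb[symmetric] by blast
    show "r ` Io \<inter> c ` Jb = {}" "c ` Jo \<inter> r ` Ib = {}" "r ` Io \<inter> c ` Jo = {}" "r ` Ib \<inter> c ` Jb = {}"
      using s RC by blast+
  qed
  have p3: "\<forall>P\<in>oriented_exchange_paths \<Phi> \<Phi>'.
         let conn = (\<lambda>A B. (hd P \<in> A \<and> last P \<in> B) \<or> (hd P \<in> B \<and> last P \<in> A)) in
         conn (r ` Io) (r ` Ib) \<or> conn (c ` Jo) (c ` Jb) \<or>
         conn (r ` Io) (c ` Jo) \<or> conn (r ` Ib) (c ` Jb)"
  proof
    fix P assume "P \<in> oriented_exchange_paths \<Phi> \<Phi>'"
    then have "P \<in> Ob" using OE by simp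
    note h = conn[OF this, unfolded Dform rIo rIb cJo cJb image_Un]
    have hd4: "hd P \<in> r ` Io \<or> hd P \<in> r ` Ib \<or> hd P \<in> c ` Jo \<or> hd P \<in> c ` Jb" using h by auto
    have ls4: "last P \<in> r ` Io \<or> last P \<in> r ` Ib \<or> last P \<in> c ` Jo \<or> last P \<in> c ` Jb" using h by auto
    have iff: "(hd P \<in> r ` Io \<or> hd P \<in> c ` Jb) \<longleftrightarrow> (last P \<in> r ` Ib \<or> last P \<in> c ` Jo)" using h by auto
    show "let conn = (\<lambda>A B. (hd P \<in> A \<and> last P \<in> B) \<or> (hd P \<in> B \<and> last P \<in> A)) in
         conn (r ` Io) (r ` Ib) \<or> conn (c ` Jo) (c ` Jb) \<or>
         conn (r ` Io) (c ` Jo) \<or> conn (r ` Ib) (c ` Jb)"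
      unfolding Let_def
    proof -
      from hd4 show "((hd P \<in> r ` Io \<and> last P \<in> r ` Ib) \<or> (hd P \<in> r ` Ib \<and> last P \<in> r ` Io)) \<or>
        ((hd P \<in> c ` Jo \<and> last P \<in> c ` Jb) \<or> (hd P \<in> c ` Jb \<and> last P \<in> c ` Jo)) \<or>
        ((hd P \<in> r ` Io \<and> last P \<in> c ` Jo) \<or> (hd P \<in> c ` Jo \<and> last P \<in> r ` Io)) \<or>
        ((hd P \<in> r ` Ib \<and> last P \<in> c ` Jb) \<or> (hd P \<in> c ` Jb \<and> last P \<in> r ` Ib))"
      proof (elim disjE)
        assume a: "hd P \<in> r ` Io"
        then have "last P \<in> r ` Ib \<or> last P \<in> c ` Jo" using iff by auto
        then show ?thesis using a by blast
      next
        assume a: "hd P \<in> c ` Jb"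
        then have "last P \<in> r ` Ib \<or> last P \<in> c ` Jo" using iff by auto
        then show ?thesis using a by blast
      next
        assume a: "hd P \<in> r ` Ib"
        then have "hd P \<notin> r ` Io" "hd P \<notin> c ` Jb" using dis4 by auto
        then have "last P \<in> r ` Io \<or> last P \<in> c ` Jb" using iff ls4 by auto
        then show ?thesis using a by blast
      next
        assume a: "hd P \<in> c ` Jo"
        then have "hd P \<notin> r ` Io" "hd P \<notin> c ` Jb" using dis4 by auto
        then have "last P \<in> r ` Io \<or> last P \<in> c ` Jb" using iff ls4 by auto
        then show ?thesis using a by blast
      qed
    qed
  qed
  have p4: "\<forall>P\<in>oriented_exchange_paths \<Phi> \<Phi>'. \<exists>s::bool.
         \<forall>(a,b)\<in>set (zip P (tl P)).
           ((a,b) \<in> flow_edges \<Phi> - flow_edges \<Phi>' \<longrightarrow> s) \<and>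
           ((a,b) \<in> flow_edges \<Phi>' - flow_edges \<Phi> \<longrightarrow> \<not> s) \<and>
           ((b,a) \<in> flow_edges \<Phi> - flow_edges \<Phi>' \<longrightarrow> \<not> s) \<and>
           ((b,a) \<in> flow_edges \<Phi>' - flow_edges \<Phi> \<longrightarrow> s)"
    unfolding OE by (intro ballI orient)
  show ?thesis by (intro conjI p1 p2 p3 p4)
qed


end
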